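(* Let $b\in\mathbb{Z}^{V_+}_{\ge0}$ and $\bar x\in\mathcal{X}\cap\mathbb{Z}^E$. Then $$\operatorname{conv}\big(\Pi(\bar x)\cap[\mathbf 0,b]^N\big)=\bigcap_{R\in\mathcal{R}(\bar x)}\operatorname{conv}\big(\Pi(R)\cap[\mathbf 0,b]^N\big).$$
   Context: $G=(V,E)$ complete undirected graph with $V=\{0\}\cup V_+$ ($0$ depot, $V_+$ customers); $D=(V,A)$ replaces each edge by two opposite arcs. Capacity $C>0$; scenarios $\xi\in[N]$ with demands $d^\xi\in\mathbb{Q}^{V_+}_{\ge0}$, $d^\xi(v)\le C$, and probabilities $p_\xi\ge0$ summing to $1$; $\bar d=\sum_\xi p_\xi d^\xi$. $f(S)=\sum_{i\in S}f(i)$; $\delta(S)$: edges with exactly one end in $S$; $E(S)$: edges with both ends in $S$. $\mathcal{X}$ is one of $\mathcal{X}_{\mathrm{sub}}=\{x\in[0,2]^E: x(\delta(v))=2\ \forall v\in V_+,\ x(E(S))\le|S|-1\ \forall\emptyset\ne S\subseteq V_+\}$ or $\mathcal{X}_{\mathrm{cvrp}}=\mathcal{X}_{\mathrm{sub}}\cap\{x:x(\delta(0))=2k,\ x(E(S))\le|S|-\lceil\bar d(S)/C\rceil\}$. A route $R=(v_1,\dots,v_\ell)$ is the cycle $0,v_1,\dots,v_\ell,0$ through distinct customers, $v_0=v_{\ell+1}=0$. Each $x\in\mathcal{X}\cap\mathbb{Z}^E$ encodes a collection of routes $\mathcal{R}(x)$ whose customer sets partition $V_+$. For a route $R$ and $\xi$,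 $\mathcal{Y}^\xi(R)$ is the set of $y^\xi\in\mathbb{Z}^{V_+}_{\ge0}$ for which there exist $f\in\mathbb{R}^A_{\ge0}$, $g\in\mathbb{R}^{V_+}_{\ge0}$ with $f_{(v_{i-1},v_i)}+d^\xi(v_i)=f_{(v_i,v_{i+1})}+g_{v_i}$ ($i\in[\ell]$), $f_{(v_{i-1},v_i)}\le C$ ($i\in[\ell+1]$), $g_{v_i}\le Cy^\xi_{v_i}$ ($i\in[\ell]$). $\Pi(R)=\mathcal{Y}^1(R)\times\cdots\times\mathcal{Y}^N(R)\subseteq\mathbb{Z}^{[N]\times V_+}$, $\Pi(x)=\bigcap_{R\in\mathcal{R}(x)}\Pi(R)$. $[\mathbf 0,b]^N=\{y:0\le y^\xi_v\le b_v\}$. *)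

theory Defs
  imports "HOL-Analysis.Analysis"
begin

text \<open>Vertices are 0..n, 0 is the depot, customers are V_+ = {1..n}.
  Undirected edges are two-element sets of vertices. Scenarios are [N] = {1..N}.\<close>

definition Vplus :: "nat \<Rightarrow> nat set" where
  "Vplus n = {1..n}"

definition Edges :: "nat \<Rightarrow> nat set set" where
  "Edges n = {e. \<exists>u v. e = {u, v} \<and> u \<noteq> v \<and> u \<le> n \<and> v \<le> n}"

definition delta :: "nat \<Rightarrow> nat set \<Rightarrow> nat set set" where
  "delta n S = {e \<in> Edges n. card (e \<inter> S) = 1}"

definition Ein :: "nat \<Rightarrow> nat set \<Rightarrow> nat set set" where
  "Ein n S = {e \<in> Edges n. e \<subseteq> S}"

definition Xsub :: "nat \<Rightarrow> (nat set \<Rightarrow> real) set" where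
  "Xsub n = {x. (\<forall>e. e \<notin> Edges n \<longrightarrow> x e = 0)
      \<and> (\<forall>e \<in> Edges n. 0 \<le> x e \<and> x e \<le> 2)
      \<and> (\<forall>v \<in> Vplus n. sum x (delta n {v}) = 2)
      \<and> (\<forall>S. S \<noteq> {} \<and> S \<subseteq> Vplus n \<longrightarrow> sum x (Ein n S) \<le> real (card S) - 1)}"

definition Xcvrp :: "nat \<Rightarrow> nat \<Rightarrow> real \<Rightarrow> (nat \<Rightarrow> real) \<Rightarrow> (nat set \<Rightarrow> real) set" where
  "Xcvrp n k C dbar = Xsub n \<inter> {x. sum x (delta n {0}) = 2 * real k
      \<and> (\<forall>S. S \<noteq> {} \<and> S \<subseteq> Vplus n \<longrightarrow>
            sum x (Ein n S) \<le> real (card S) - of_int \<lceil>sum dbar S / C\<rceil>)}"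

text \<open>Vertex at position i of the cycle 0, v_1, ..., v_l, 0 (positions 0 and l+1 are the depot).\<close>
definition rvert :: "nat list \<Rightarrow> nat \<Rightarrow> nat" where
  "rvert R i = (if 1 \<le> i \<and> i \<le> length R then R ! (i - 1) else 0)"

text \<open>R is one of the routes encoded by the integral x (either orientation of the cycle).\<close>
definition route_of :: "nat \<Rightarrow> (nat set \<Rightarrow> real) \<Rightarrow> nat list \<Rightarrow> bool" where
  "route_of n x R \<longleftrightarrow> R \<noteq> [] \<and> distinct R \<and> set R \<subseteq> Vplus n
     \<and> (length R = 1 \<longrightarrow> x {0, hd R} = 2)
     \<and> (length R \<ge> 2 \<longrightarrow> (\<forall>i \<in> {1..length R + 1}. x {rvert R (i - 1), rvert R i} = 1))"

definition Routes :: "nat \<Rightarrow> (nat set \<Rightarrow> real) \<Rightarrow> nat list set" where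
  "Routes n x = {R. route_of n x R}"

text \<open>Ambient lattice points Z_{>=0}^{[N] x V_+}, as functions vanishing outside [N] x V_+.\<close>
definition Amb :: "nat \<Rightarrow> nat \<Rightarrow> (nat \<times> nat \<Rightarrow> int) set" where
  "Amb n N = {y. (\<forall>\<xi> v. (\<xi>, v) \<notin> {1..N} \<times> Vplus n \<longrightarrow> y (\<xi>, v) = 0)
                 \<and> (\<forall>\<xi> \<in> {1..N}. \<forall>v \<in> Vplus n. 0 \<le> y (\<xi>, v))}"

text \<open>Y^xi(R): flows f indexed by the arc positions 1..l+1 (arc (v_{i-1},v_i)),
  g indexed by customer positions 1..l.\<close>
definition Yset :: "real \<Rightarrow> (nat \<Rightarrow> real) \<Rightarrow> nat list \<Rightarrow> (nat \<Rightarrow> int) set" where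
  "Yset C dxi R = {y. \<exists>f g :: nat \<Rightarrow> real.
      (\<forall>i \<in> {1..length R + 1}. 0 \<le> f i \<and> f i \<le> C)
    \<and> (\<forall>i \<in> {1..length R}. 0 \<le> g i \<and> g i \<le> C * of_int (y (R ! (i - 1))))
    \<and> (\<forall>i \<in> {1..length R}. f i + dxi (R ! (i - 1)) = f (i + 1) + g i)}"

definition PiR :: "nat \<Rightarrow> nat \<Rightarrow> real \<Rightarrow> (nat \<Rightarrow> nat \<Rightarrow> real) \<Rightarrow> nat list \<Rightarrow> (nat \<times> nat \<Rightarrow> int) set" where
  "PiR n N C d R = {y \<in> Amb n N. \<forall>\<xi> \<in> {1..N}. (\<lambda>v. y (\<xi>, v)) \<in> Yset C (d \<xi>) R}"

definition PiX :: "nat \<Rightarrow> nat \<Rightarrow> real \<Rightarrow> (nat \<Rightarrow> nat \<Rightarrow> real) \<Rightarrow> (nat set \<Rightarrow> real) \<Rightarrow> (nat \<times> nat \<Rightarrow> int) set" where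
  "PiX n N C d x = Amb n N \<inter> (\<Inter>R \<in> Routes n x. PiR n N C d R)"

definition Box :: "nat \<Rightarrow> nat \<Rightarrow> (nat \<Rightarrow> int) \<Rightarrow> (nat \<times> nat \<Rightarrow> int) set" where
  "Box n N b = {y. \<forall>\<xi> \<in> {1..N}. \<forall>v \<in> Vplus n. 0 \<le> y (\<xi>, v) \<and> y (\<xi>, v) \<le> b v}"

text \<open>Convex hull in R^{[N] x V_+}, written out as the set of finite convex combinations
  (function spaces are not a real_vector instance in the library).\<close>
definition conv :: "(nat \<times> nat \<Rightarrow> real) set \<Rightarrow> (nat \<times> nat \<Rightarrow> real) set" where
  "conv S = {z. \<exists>F u. finite F \<and> F \<subseteq> S \<and> (\<forall>w \<in> F. 0 \<le> u w) \<and> sum u F = 1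
                    \<and> z = (\<lambda>i. \<Sum>w \<in> F. u w * w i)}"

definition realpts :: "(nat \<times> nat \<Rightarrow> int) set \<Rightarrow> (nat \<times> nat \<Rightarrow> real) set" where
  "realpts Y = (\<lambda>y. \<lambda>i. real_of_int (y i)) ` Y"

definition RAmb :: "nat \<Rightarrow> nat \<Rightarrow> (nat \<times> nat \<Rightarrow> real) set" where
  "RAmb n N = {z. \<forall>\<xi> v. (\<xi>, v) \<notin> {1..N} \<times> Vplus n \<longrightarrow> z (\<xi>, v) = 0}"

end

theory Submission
  imports Defs
begin


definition mrg :: "(nat \<times> nat) set \<Rightarrow> (nat \<times> nat \<Rightarrow> 'a) \<Rightarrow> (nat \<times> nat \<Rightarrow> 'a) \<Rightarrow> (nat \<times> nat \<Rightarrow> 'a)" where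
  "mrg P a c = (\<lambda>i. if i \<in> P then a i else c i)"

lemma conv_mono: "A \<subseteq> B \<Longrightarrow> conv A \<subseteq> conv B"
  unfolding conv_def by blast

lemma conv_idx:
  assumes K: "finite K" and pS: "\<forall>k\<in>K. q k \<in> S" and w0: "\<forall>k\<in>K. 0 \<le> w k" and w1: "sum w K = 1"
  shows "(\<lambda>i. \<Sum>k\<in>K. w k * q k i) \<in> conv S"
proof -
  define F where "F = q ` K"
  define u where "u y = (\<Sum>k\<in>{k\<in>K. q k = y}. w k)" for y
  have "finite F" "F \<subseteq> S" using K pS by (auto simp: F_def)
  moreover have "\<forall>y\<in>F. 0 \<le> u y" using w0 unfolding u_def by (auto intro: sum_nonneg)
  moreover have "sum u F = 1" using w1 sum.image_gen[OF K, of w q] by (simp add: u_def F_def)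
  moreover have "(\<lambda>i. \<Sum>k\<in>K. w k * q k i) = (\<lambda>i. \<Sum>y\<in>F. u y * y i)"
  proof
    fix i
    have "(\<Sum>k\<in>K. w k * q k i) = (\<Sum>y\<in>F. \<Sum>k\<in>{k\<in>K. q k = y}. w k * q k i)"
      using sum.image_gen[OF K, of "\<lambda>k. w k * q k i" q] by (simp add: F_def)
    also have "\<dots> = (\<Sum>y\<in>F. u y * y i)"
      unfolding u_def sum_distrib_right by (intro sum.cong refl) auto
    finally show "(\<Sum>k\<in>K. w k * q k i) = (\<Sum>y\<in>F. u y * y i)" .
  qed
  ultimately show ?thesis unfolding conv_def by blast
qed

lemma conv_merge:
  assumes M: "\<forall>a\<in>A. \<forall>c\<in>B. mrg P a c \<in> S"
    and zA: "z \<in> conv A" and zB: "z \<in> conv B"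
  shows "z \<in> conv S"
proof -
  obtain F u where F: "finite F" "F \<subseteq> A" "\<forall>w\<in>F. 0 \<le> u w" "sum u F = 1"
    and z1: "z = (\<lambda>i. \<Sum>w\<in>F. u w * w i)" using zA unfolding conv_def by blast
  obtain G v where G: "finite G" "G \<subseteq> B" "\<forall>w\<in>G. 0 \<le> v w" "sum v G = 1"
    and z2: "z = (\<lambda>i. \<Sum>w\<in>G. v w * w i)" using zB unfolding conv_def by blast
  define K where "K = F \<times> G"
  define w where "w kk = u (fst kk) * v (snd kk)" for kk
  define q where "q kk = (mrg P (fst kk) (snd kk) :: nat \<times> nat \<Rightarrow> real)" for kk
  have K: "finite K" using F G by (simp add: K_def)
  have qS: "\<forall>k\<in>K. q k \<in> S" using M F G by (force simp: K_def q_def)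
  have w0: "\<forall>k\<in>K. 0 \<le> w k" using F G by (auto simp: K_def w_def)
  have "sum w K = (\<Sum>a\<in>F. \<Sum>c\<in>G. u a * v c)"
    unfolding K_def w_def by (simp add: sum.cartesian_product split_beta)
  then have w1: "sum w K = 1" using F G by (simp add: sum_product[symmetric])
  have "z = (\<lambda>i. \<Sum>k\<in>K. w k * q k i)"
  proof
    fix i
    show "z i = (\<Sum>k\<in>K. w k * q k i)"
    proof (cases "i \<in> P")
      case True
      have "(\<Sum>k\<in>K. w k * q k i) = (\<Sum>a\<in>F. \<Sum>c\<in>G. u a * v c * a i)"
        unfolding K_def using True
        by (simp add: sum.cartesian_product split_beta w_def q_def mrg_def)
      also have "\<dots> = (\<Sum>a\<in>F. u a * a i * (\<Sum>c\<in>G. v c))"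
        by (simp add: sum_distrib_left mult_ac)
      also have "\<dots> = z i" using F G z1 by simp
      finally show ?thesis by simp
    next
      case False
      have "(\<Sum>k\<in>K. w k * q k i) = (\<Sum>a\<in>F. \<Sum>c\<in>G. u a * v c * c i)"
        unfolding K_def using False
        by (simp add: sum.cartesian_product split_beta w_def q_def mrg_def)
      also have "\<dots> = (\<Sum>a\<in>F. u a * (\<Sum>c\<in>G. v c * c i))"
        by (simp add: sum_distrib_left mult_ac)
      also have "\<dots> = z i" using F G z2 by (simp add: sum_distrib_right[symmetric])
      finally show ?thesis by simp
    qed
  qed
  then show ?thesis using conv_idx[OF K qS w0 w1] by simp
qed



lemma Yset_cong:
  assumes "\<forall>v\<in>set R. y v = y' v" "y \<in> Yset C dxi R"
  shows "y' \<in> Yset C dxi R"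
proof -
  have "\<forall>i \<in> {1..length R}. y (R ! (i - 1)) = y' (R ! (i - 1))"
    using assms(1) by (auto intro!: nth_mem)
  then show ?thesis using assms(2) unfolding Yset_def by fastforce
qed

lemma Yset_rev:
  assumes "y \<in> Yset C dxi R"
  shows "y \<in> Yset C dxi (rev R)"
proof -
  obtain f g :: "nat \<Rightarrow> real" where
    f: "\<forall>i \<in> {1..length R + 1}. 0 \<le> f i \<and> f i \<le> C"
    and g: "\<forall>i \<in> {1..length R}. 0 \<le> g i \<and> g i \<le> C * of_int (y (R ! (i - 1)))"
    and e: "\<forall>i \<in> {1..length R}. f i + dxi (R ! (i - 1)) = f (i + 1) + g i"
    using assms unfolding Yset_def by blast
  define l where "l = length R"
  define f' where "f' i = C - f (l + 2 - i)" for i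
  define g' where "g' i = g (l + 1 - i)" for i
  have rv: "rev R ! (i - 1) = R ! ((l + 1 - i) - 1)" if "i \<in> {1..l}" for i
    using that by (auto simp: rev_nth l_def Suc_diff_Suc)
  have "\<forall>i \<in> {1..length (rev R) + 1}. 0 \<le> f' i \<and> f' i \<le> C"
  proof
    fix i assume i: "i \<in> {1..length (rev R) + 1}"
    then have "l + 2 - i \<in> {1..length R + 1}" by (auto simp: l_def)
    then show "0 \<le> f' i \<and> f' i \<le> C" using f unfolding f'_def by auto
  qed
  moreover have "\<forall>i \<in> {1..length (rev R)}. 0 \<le> g' i \<and> g' i \<le> C * of_int (y (rev R ! (i - 1)))"
  proof
    fix i assume i: "i \<in> {1..length (rev R)}"
    then have "l + 1 - i \<in> {1..length R}" by (auto simp: l_def)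
    then have "0 \<le> g (l + 1 - i) \<and> g (l + 1 - i) \<le> C * of_int (y (R ! ((l + 1 - i) - 1)))"
      using g by blast
    moreover have "rev R ! (i - 1) = R ! ((l + 1 - i) - 1)" using rv[of i] i by (auto simp: l_def)
    ultimately show "0 \<le> g' i \<and> g' i \<le> C * of_int (y (rev R ! (i - 1)))"
      unfolding g'_def by simp
  qed
  moreover have "\<forall>i \<in> {1..length (rev R)}. f' i + dxi (rev R ! (i - 1)) = f' (i + 1) + g' i"
  proof
    fix i assume i: "i \<in> {1..length (rev R)}"
    define j where "j = l + 1 - i"
    have j: "j \<in> {1..length R}" using i by (auto simp: l_def j_def)
    have "f j + dxi (R ! (j - 1)) = f (j + 1) + g j" using e j by blast
    moreover have "l + 2 - i = j + 1" "l + 2 - (i + 1) = j" using i by (auto simp: j_def l_def)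
    ultimately show "f' i + dxi (rev R ! (i - 1)) = f' (i + 1) + g' i"
      using rv[of i] i unfolding f'_def g'_def j_def[symmetric] by (auto simp: l_def)
  qed
  ultimately show ?thesis unfolding Yset_def by blast
qed

lemma Yset_rev_eq: "Yset C dxi (rev R) = Yset C dxi R"
  using Yset_rev[of _ C dxi R] Yset_rev[of _ C dxi "rev R"] by auto



lemma edge_in: "u \<le> n \<Longrightarrow> v \<le> n \<Longrightarrow> u \<noteq> v \<Longrightarrow> {u, v} \<in> Edges n"
  unfolding Edges_def by blast

lemma finite_Edges: "finite (Edges n)"
proof -
  have "Edges n \<subseteq> Pow {0..n}" unfolding Edges_def by auto
  then show ?thesis by (rule finite_subset) simp
qed

lemma Xsub_D:
  assumes "x \<in> Xsub n"
  shows "\<forall>e \<in> Edges n. 0 \<le> x e \<and> x e \<le> 2"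
    and "\<forall>v \<in> Vplus n. sum x (delta n {v}) = 2"
    and "\<forall>S. S \<noteq> {} \<and> S \<subseteq> Vplus n \<longrightarrow> sum x (Ein n S) \<le> real (card S) - 1"
proof -
  have H: "(\<forall>e. e \<notin> Edges n \<longrightarrow> x e = 0)
      \<and> (\<forall>e \<in> Edges n. 0 \<le> x e \<and> x e \<le> 2)
      \<and> (\<forall>v \<in> Vplus n. sum x (delta n {v}) = 2)
      \<and> (\<forall>S. S \<noteq> {} \<and> S \<subseteq> Vplus n \<longrightarrow> sum x (Ein n S) \<le> real (card S) - 1)"
    using assms unfolding Xsub_def by (rule CollectD)
  show "\<forall>e \<in> Edges n. 0 \<le> x e \<and> x e \<le> 2" using H[THEN conjunct2, THEN conjunct1] .
  show "\<forall>v \<in> Vplus n. sum x (delta n {v}) = 2" using H[THEN conjunct2, THEN conjunct2, THEN conjunct1] .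
  show "\<forall>S. S \<noteq> {} \<and> S \<subseteq> Vplus n \<longrightarrow> sum x (Ein n S) \<le> real (card S) - 1"
    using H[THEN conjunct2, THEN conjunct2, THEN conjunct2] .
qed

lemma edge_nonneg: "x \<in> Xsub n \<Longrightarrow> u \<le> n \<Longrightarrow> v \<le> n \<Longrightarrow> u \<noteq> v \<Longrightarrow> 0 \<le> x {u, v}"
proof -
  assume a: "x \<in> Xsub n" "u \<le> n" "v \<le> n" "u \<noteq> v"
  have "{u, v} \<in> Edges n" using a edge_in by simp
  then show "0 \<le> x {u, v}" using Xsub_D(1)[OF a(1)] by simp
qed

lemma delta_single: "v \<le> n \<Longrightarrow> delta n {v} = (\<lambda>u. {v, u}) ` ({0..n} - {v})"
proof (intro equalityI subsetI)
  fix e assume v: "v \<le> n" and e: "e \<in> delta n {v}"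
  then obtain a c where ac: "e = {a, c}" "a \<noteq> c" "a \<le> n" "c \<le> n" and ce: "card (e \<inter> {v}) = 1"
    unfolding delta_def Edges_def by blast
  have "v \<in> e" using ce by (cases "v \<in> e") auto
  then obtain w where w: "e = {v, w}" "w \<noteq> v" "w \<le> n"
  proof (cases "v = a")
    case True
    then show ?thesis using that[of c] ac by simp
  next
    case False
    then have "v = c" using \<open>v \<in> e\<close> ac by simp
    then show ?thesis using that[of a] ac by (simp add: insert_commute)
  qed
  have wA: "w \<in> {0..n} - {v}" using w(2,3) by simp
  show "e \<in> (\<lambda>u. {v, u}) ` ({0..n} - {v})" by (rule rev_image_eqI[OF wA]) (rule w(1))
next
  fix e assume v: "v \<le> n" and eim: "e \<in> (\<lambda>u. {v, u}) ` ({0..n} - {v})"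
  from eim obtain u where u: "u \<in> {0..n} - {v}" "e = {v, u}" by (rule imageE)
  then have "u \<le> n" "u \<noteq> v" by auto
  then have "e \<in> Edges n" "card (e \<inter> {v}) = 1" using edge_in[of v n u] v u(2) by auto
  then show "e \<in> delta n {v}" unfolding delta_def by simp
qed

lemma deg_sum:
  assumes "x \<in> Xsub n" "v \<in> Vplus n"
  shows "(\<Sum>u\<in>{0..n} - {v}. x {v, u}) = 2"
proof -
  have vn: "v \<le> n" using assms(2) by (simp add: Vplus_def)
  have inj: "inj_on (\<lambda>u. {v, u}) ({0..n} - {v})"
  proof (rule inj_onI)
    fix a c assume "a \<in> {0..n} - {v}" "c \<in> {0..n} - {v}" "{v, a} = {v, c}"
    then show "a = c" by (metis Diff_iff doubleton_eq_iff singletonI)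
  qed
  have "sum x (delta n {v}) = 2" using assms(2) Xsub_D(2)[OF assms(1)] by simp
  moreover have "sum x (delta n {v}) = (\<Sum>u\<in>{0..n} - {v}. x {v, u})"
    unfolding delta_single[OF vn] using sum.reindex[OF inj, of x] by (simp add: comp_def)
  ultimately show ?thesis by simp
qed

lemma Ein_pair: "u \<le> n \<Longrightarrow> v \<le> n \<Longrightarrow> u \<noteq> v \<Longrightarrow> Ein n {u, v} = {{u, v}}"
  unfolding Ein_def Edges_def by (auto simp: doubleton_eq_iff)

lemma pair_le1:
  assumes "x \<in> Xsub n" "u \<in> Vplus n" "v \<in> Vplus n" "u \<noteq> v"
  shows "x {u, v} \<le> 1"
proof -
  have "sum x (Ein n {u, v}) \<le> real (card {u, v}) - 1"
    using Xsub_D(3)[OF assms(1), rule_format, of "{u, v}"] assms(2,3) by auto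
  then show ?thesis using assms(2-4) Ein_pair[of u n v] by (simp add: Vplus_def)
qed

lemma sum_rest_zero:
  fixes f :: "'a \<Rightarrow> real"
  assumes "finite A" "B \<subseteq> A" "\<forall>u\<in>A. 0 \<le> f u" "sum f A = sum f B" "u \<in> A - B"
  shows "f u = 0"
proof -
  have "sum f A = sum f B + sum f (A - B)"
    using assms(1,2) by (metis add.commute sum.subset_diff)
  then have "sum f (A - B) = 0" using assms(4) by simp
  then show ?thesis using assms sum_nonneg_eq_0_iff[of "A - B" f] by auto
qed



lemma rvert_0[simp]: "rvert R 0 = 0"
  by (simp add: rvert_def)

lemma rvert_out: "length R < i \<Longrightarrow> rvert R i = 0"
  by (simp add: rvert_def)

lemma rvert_in: "1 \<le> i \<Longrightarrow> i \<le> length R \<Longrightarrow> rvert R i = R ! (i - 1)"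
  by (simp add: rvert_def)

lemma rvert_mem: "1 \<le> i \<Longrightarrow> i \<le> length R \<Longrightarrow> rvert R i \<in> set R"
  by (simp add: rvert_def)

lemma route_basic:
  assumes "route_of n x R"
  shows "R \<noteq> []" "distinct R" "set R \<subseteq> Vplus n"
    "length R = 1 \<Longrightarrow> x {0, hd R} = 2"
    "length R \<ge> 2 \<Longrightarrow> i \<in> {1..length R + 1} \<Longrightarrow> x {rvert R (i - 1), rvert R i} = 1"
  using assms unfolding route_of_def by auto

lemma rvert_nz:
  assumes "route_of n x R"
  shows "rvert R i \<noteq> 0 \<longleftrightarrow> 1 \<le> i \<and> i \<le> length R"
proof
  assume "rvert R i \<noteq> 0" then show "1 \<le> i \<and> i \<le> length R"
    by (cases "1 \<le> i \<and> i \<le> length R") (auto simp: rvert_def)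
next
  assume i: "1 \<le> i \<and> i \<le> length R"
  then have "rvert R i \<in> Vplus n" using rvert_mem[of i R] route_basic(3)[OF assms] by auto
  then show "rvert R i \<noteq> 0" by (simp add: Vplus_def)
qed

lemma rvert_le:
  assumes "route_of n x R"
  shows "rvert R i \<le> n"
proof (cases "1 \<le> i \<and> i \<le> length R")
  case True
  then have "rvert R i \<in> Vplus n" using rvert_mem[of i R] route_basic(3)[OF assms] by auto
  then show ?thesis by (simp add: Vplus_def)
qed (auto simp: rvert_def)

lemma rvert_inj:
  assumes "route_of n x R" "rvert R i = rvert R j" "rvert R i \<noteq> 0"
  shows "i = j"
proof -
  have i: "1 \<le> i" "i \<le> length R" using assms rvert_nz by blast+
  have j: "1 \<le> j" "j \<le> length R" using assms rvert_nz by metis+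
  have "R ! (i - 1) = R ! (j - 1)" using assms(2) i j by (simp add: rvert_in)
  then have "i - 1 = j - 1" using route_basic(2)[OF assms(1)] i j nth_eq_iff_index_eq by fastforce
  then show ?thesis using i j by simp
qed

definition nb :: "(nat set \<Rightarrow> real) \<Rightarrow> nat \<Rightarrow> nat \<Rightarrow> nat set" where
  "nb x n v = {u \<in> {0..n} - {v}. x {v, u} \<noteq> 0}"

lemma route_nb:
  assumes X: "x \<in> Xsub n" and R: "route_of n x R" and i: "1 \<le> i" "i \<le> length R"
  shows "nb x n (rvert R i) = {rvert R (i - 1), rvert R (i + 1)}"
proof -
  define v where "v = rvert R i"
  define a where "a = rvert R (i - 1)"
  define c where "c = rvert R (i + 1)"
  have v0: "v \<noteq> 0" using rvert_nz[OF R] i by (simp add: v_def)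
  have vV: "v \<in> Vplus n" using rvert_mem[of i R] route_basic(3)[OF R] i by (auto simp: v_def)
  have an: "a \<le> n" and cn: "c \<le> n" using rvert_le[OF R] by (auto simp: a_def c_def)
  have av: "a \<noteq> v"
  proof
    assume "a = v" then have "i - 1 = i" using rvert_inj[OF R, of "i - 1" i] v0 by (simp add: a_def v_def)
    then show False using i by simp
  qed
  have cv: "c \<noteq> v"
  proof
    assume "c = v" then have "i + 1 = i" using rvert_inj[OF R, of "i + 1" i] v0 by (simp add: c_def v_def)
    then show False by simp
  qed
  have fin: "finite ({0..n} - {v})" by simp
  have nonneg: "\<forall>u\<in>{0..n} - {v}. 0 \<le> x {v, u}"
    using edge_nonneg[OF X] vV by (auto simp: Vplus_def)
  have deg: "(\<Sum>u\<in>{0..n} - {v}. x {v, u}) = 2" using deg_sum[OF X vV] .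
  show ?thesis
  proof (cases "length R = 1")
    case True
    then have i1: "i = 1" using i by simp
    have a0: "a = 0" by (simp add: a_def i1)
    have c0: "c = 0" using True by (simp add: c_def i1 rvert_out)
    have "v = hd R" using True route_basic(1)[OF R] by (simp add: v_def i1 rvert_in hd_conv_nth)
    then have xv: "x {v, 0} = 2" using route_basic(4)[OF R True] by (simp add: insert_commute)
    have B: "{0} \<subseteq> {0..n} - {v}" using v0 by auto
    have z: "x {v, u} = 0" if "u \<in> ({0..n} - {v}) - {0}" for u
      using sum_rest_zero[OF fin B nonneg _ that] deg xv by simp
    have "nb x n v = {0}"
      unfolding nb_def
    proof (intro equalityI subsetI)
      fix u assume u: "u \<in> {u \<in> {0..n} - {v}. x {v, u} \<noteq> 0}"
      then show "u \<in> {0}" using z[of u] by (cases "u = 0") auto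
    next
      fix u assume "u \<in> {0::nat}"
      then show "u \<in> {u \<in> {0..n} - {v}. x {v, u} \<noteq> 0}" using xv v0 by auto
    qed
    then show ?thesis using a0 c0 by (simp add: v_def a_def c_def)
  next
    case False
    then have l2: "length R \<ge> 2" using route_basic(1)[OF R] by (cases R) (auto simp: Suc_le_eq)
    have xa: "x {v, a} = 1" using route_basic(5)[OF R l2, of i] i
      by (simp add: a_def v_def insert_commute)
    have xc: "x {v, c} = 1" using route_basic(5)[OF R l2, of "i + 1"] i
      by (simp add: c_def v_def)
    have ac: "a \<noteq> c"
    proof
      assume ac: "a = c"
      show False
      proof (cases "a = 0")
        case True
        then have "\<not> (1 \<le> i - 1 \<and> i - 1 \<le> length R)" "\<not> (1 \<le> i + 1 \<and> i + 1 \<le> length R)"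
          using rvert_nz[OF R, of "i - 1"] rvert_nz[OF R, of "i + 1"] ac
          by (auto simp: a_def c_def)
        then show False using i l2 by linarith
      next
        case False
        then have "i - 1 = i + 1" using rvert_inj[OF R, of "i - 1" "i + 1"] ac by (simp add: a_def c_def)
        then show False using i by simp
      qed
    qed
    have B: "{a, c} \<subseteq> {0..n} - {v}" using an cn av cv by auto
    have sB: "(\<Sum>u\<in>{a, c}. x {v, u}) = 2" using ac xa xc by simp
    have z: "x {v, u} = 0" if "u \<in> ({0..n} - {v}) - {a, c}" for u
      using sum_rest_zero[OF fin B nonneg _ that] deg sB by simp
    have "nb x n v = {a, c}"
      unfolding nb_def
    proof (intro equalityI subsetI)
      fix u assume u: "u \<in> {u \<in> {0..n} - {v}. x {v, u} \<noteq> 0}"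
      then show "u \<in> {a, c}" using z[of u] by (cases "u \<in> {a, c}") auto
    next
      fix u assume "u \<in> {a, c}"
      then show "u \<in> {u \<in> {0..n} - {v}. x {v, u} \<noteq> 0}" using xa xc B by auto
    qed
    then show ?thesis by (simp add: v_def a_def c_def)
  qed
qed



lemma pair_eq: "{a, b} = {a, c} \<Longrightarrow> b = c"
  by (metis doubleton_eq_iff)

lemma step_fwd:
  assumes X: "x \<in> Xsub n" and R: "route_of n x R" and R': "route_of n x R'"
    and k: "1 \<le> k" "k \<le> length R" and e1: "rvert R k = rvert R' k'"
    and e0: "rvert R (k - 1) = rvert R' (k' - 1)"
  shows "rvert R (k + 1) = rvert R' (k' + 1)"
proof -
  have "rvert R k \<noteq> 0" using rvert_nz[OF R] k by simp
  then have k': "1 \<le> k'" "k' \<le> length R'" using rvert_nz[OF R'] e1 by auto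
  have "{rvert R (k - 1), rvert R (k + 1)} = {rvert R' (k' - 1), rvert R' (k' + 1)}"
    using route_nb[OF X R k] route_nb[OF X R' k'] e1 by simp
  then show ?thesis using e0 pair_eq by metis
qed

lemma step_bwd:
  assumes X: "x \<in> Xsub n" and R: "route_of n x R" and R': "route_of n x R'"
    and k: "1 \<le> k" "k \<le> length R" and e1: "rvert R k = rvert R' k'"
    and e0: "rvert R (k + 1) = rvert R' (k' + 1)"
  shows "rvert R (k - 1) = rvert R' (k' - 1)"
proof -
  have "rvert R k \<noteq> 0" using rvert_nz[OF R] k by simp
  then have k': "1 \<le> k'" "k' \<le> length R'" using rvert_nz[OF R'] e1 by auto
  have "{rvert R (k + 1), rvert R (k - 1)} = {rvert R' (k' + 1), rvert R' (k' - 1)}"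
    using route_nb[OF X R k] route_nb[OF X R' k'] e1 by (simp add: insert_commute)
  then show ?thesis using e0 pair_eq by metis
qed

lemma same_route:
  assumes X: "x \<in> Xsub n" and R: "route_of n x R" and R': "route_of n x R'"
    and i: "1 \<le> i" "i \<le> length R" and e1: "rvert R i = rvert R' j"
    and e2: "rvert R (i + 1) = rvert R' (j + 1)"
  shows "R = R'"
proof -
  let ?s = "rvert R" and ?s' = "rvert R'"
  have F: "i + t \<le> length R \<longrightarrow> ?s (i + t) = ?s' (j + t) \<and> ?s (i + t + 1) = ?s' (j + t + 1)" for t
  proof (induction t)
    case 0
    then show ?case using e1 e2 by simp
  next
    case (Suc t)
    show ?case
    proof
      assume a: "i + Suc t \<le> length R"
      then have IH: "?s (i + t) = ?s' (j + t)" "?s (i + t + 1) = ?s' (j + t + 1)" using Suc by auto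
      have "?s (i + t + 1 + 1) = ?s' (j + t + 1 + 1)"
        using step_fwd[OF X R R', of "i + t + 1" "j + t + 1"] IH a by simp
      then show "?s (i + Suc t) = ?s' (j + Suc t) \<and> ?s (i + Suc t + 1) = ?s' (j + Suc t + 1)"
        using IH by simp
    qed
  qed
  have B: "t < i \<longrightarrow> t < j \<and> ?s (i - t) = ?s' (j - t) \<and> ?s (i - t + 1) = ?s' (j - t + 1)" for t
  proof (induction t)
    case 0
    have "?s i \<noteq> 0" using rvert_nz[OF R] i by simp
    then have "1 \<le> j" using e1 rvert_nz[OF R'] by auto
    then show ?case using e1 e2 by simp
  next
    case (Suc t)
    show ?case
    proof
      assume a: "Suc t < i"
      then have IH: "t < j" "?s (i - t) = ?s' (j - t)" "?s (i - t + 1) = ?s' (j - t + 1)" using Suc by auto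
      have "?s (i - t - 1) = ?s' (j - t - 1)"
        using step_bwd[OF X R R', of "i - t" "j - t"] IH a i by simp
      then have e: "?s (i - Suc t) = ?s' (j - Suc t)" by simp
      have "1 \<le> i - Suc t" "i - Suc t \<le> length R" using a i by auto
      then have "?s (i - Suc t) \<noteq> 0" using rvert_nz[OF R, of "i - Suc t"] by blast
      then have "1 \<le> j - Suc t" using e rvert_nz[OF R'] by auto
      then have "Suc t < j" by simp
      moreover have "i - Suc t + 1 = i - t" "j - Suc t + 1 = j - t" using a IH(1) by auto
      ultimately show "Suc t < j \<and> ?s (i - Suc t) = ?s' (j - Suc t) \<and> ?s (i - Suc t + 1) = ?s' (j - Suc t + 1)"
        using e IH by simp
    qed
  qed
  from B[of "i - 1"] i have b1: "i - 1 < j" "?s 1 = ?s' (j - (i - 1))" "?s 2 = ?s' (j - (i - 1) + 1)"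
    by (auto simp: numeral_2_eq_2)
  have "?s 0 = ?s' (j - (i - 1) - 1)"
    using step_bwd[OF X R R', of 1 "j - (i - 1)"] b1 i by (simp add: numeral_2_eq_2)
  moreover have "j - (i - 1) - 1 = j - i" using i by simp
  ultimately have "?s' (j - i) = 0" by simp
  moreover have "?s i \<noteq> 0" using rvert_nz[OF R] i by blast
  then have "j \<le> length R'" using e1 rvert_nz[OF R', of j] by simp
  ultimately have "\<not> (1 \<le> j - i)" using rvert_nz[OF R', of "j - i"] by auto
  then have ji: "j = i" using b1(1) by simp
  from F[of "length R - i"] i have "?s (length R) = ?s' (length R)" "?s (length R + 1) = ?s' (length R + 1)"
    using ji by auto
  moreover have "?s (length R) \<noteq> 0" "?s (length R + 1) = 0" using rvert_nz[OF R, of "length R"] rvert_out[of R "length R + 1"] i by auto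
  ultimately have "length R \<le> length R'" "\<not> (length R + 1 \<le> length R')"
    using rvert_nz[OF R', of "length R"] rvert_nz[OF R', of "length R + 1"] by auto
  then have len: "length R = length R'" by simp
  have pos: "?s p = ?s' p" if p: "1 \<le> p" "p \<le> length R" for p
  proof (cases "i \<le> p")
    case True
    then show ?thesis using F[of "p - i"] ji p by simp
  next
    case False
    then show ?thesis using B[of "i - p"] ji p by simp
  qed
  show ?thesis
  proof (rule nth_equalityI)
    show "length R = length R'" by (rule len)
    fix q assume "q < length R"
    then show "R ! q = R' ! q" using pos[of "q + 1"] len by (simp add: rvert_in)
  qed
qed

lemma rvert_rev: "rvert (rev R) i = rvert R (length R + 1 - i)"
  by (auto simp: rvert_def rev_nth Suc_diff_Suc)

lemma route_rev:
  assumes R: "route_of n x R"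
  shows "route_of n x (rev R)"
proof (cases "length R = 1")
  case True
  then obtain a where "R = [a]" by (cases R) auto
  then show ?thesis using R by simp
next
  case False
  then have l2: "length R \<ge> 2" using route_basic(1)[OF R] by (cases R) (auto simp: Suc_le_eq)
  have "x {rvert (rev R) (i - 1), rvert (rev R) i} = 1" if i: "i \<in> {1..length R + 1}" for i
  proof -
    define j where "j = length R + 2 - i"
    have j: "j \<in> {1..length R + 1}" using i by (auto simp: j_def)
    have "rvert (rev R) (i - 1) = rvert R j" "rvert (rev R) i = rvert R (j - 1)"
      using i by (auto simp: rvert_rev j_def)
    then show ?thesis using route_basic(5)[OF R l2 j] by (simp add: insert_commute)
  qed
  then show ?thesis using R l2 unfolding route_of_def by auto
qed

lemma route_share:
  assumes X: "x \<in> Xsub n" and R: "route_of n x R" and R': "route_of n x R'"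
    and v: "v \<in> set R" "v \<in> set R'"
  shows "R' = R \<or> R' = rev R"
proof -
  obtain i0 where i0: "i0 < length R" "R ! i0 = v" using v(1) by (auto simp: in_set_conv_nth)
  obtain j0 where j0: "j0 < length R'" "R' ! j0 = v" using v(2) by (auto simp: in_set_conv_nth)
  define i where "i = i0 + 1"
  define j where "j = j0 + 1"
  have i: "1 \<le> i" "i \<le> length R" and j: "1 \<le> j" "j \<le> length R'" using i0 j0 by (auto simp: i_def j_def)
  have e: "rvert R i = rvert R' j" using i0 j0 by (simp add: rvert_in i_def j_def)
  have "{rvert R (i - 1), rvert R (i + 1)} = {rvert R' (j - 1), rvert R' (j + 1)}"
    using route_nb[OF X R i] route_nb[OF X R' j] e by simp
  then have "rvert R (i + 1) = rvert R' (j + 1) \<or> rvert R (i + 1) = rvert R' (j - 1)"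
    by (auto simp: doubleton_eq_iff)
  then show ?thesis
  proof
    assume "rvert R (i + 1) = rvert R' (j + 1)"
    then show ?thesis using same_route[OF X R R' i e] by simp
  next
    assume a: "rvert R (i + 1) = rvert R' (j - 1)"
    define j' where "j' = length R' + 1 - j"
    have "rvert (rev R') j' = rvert R' j" "rvert (rev R') (j' + 1) = rvert R' (j - 1)"
      using j by (auto simp: rvert_rev j'_def)
    then have "R = rev R'" using same_route[OF X R route_rev[OF R'] i, of j'] e a by simp
    then show ?thesis by simp
  qed
qed



definition cpath :: "(nat set \<Rightarrow> real) \<Rightarrow> nat \<Rightarrow> nat list \<Rightarrow> bool" where
  "cpath x n P \<longleftrightarrow> P \<noteq> [] \<and> distinct P \<and> set P \<subseteq> Vplus n
     \<and> (\<forall>i. i + 1 < length P \<longrightarrow> x {P ! i, P ! (i + 1)} = 1)"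

lemma cpath_rev:
  assumes "cpath x n P" shows "cpath x n (rev P)"
proof -
  have "x {rev P ! i, rev P ! (i + 1)} = 1" if i: "i + 1 < length P" for i
  proof -
    define k where "k = length P - 2 - i"
    have "rev P ! i = P ! (k + 1)" "rev P ! (i + 1) = P ! k" using i by (auto simp: rev_nth k_def intro!: arg_cong[where f="(!) P"])
    moreover have "k + 1 < length P" using i by (simp add: k_def)
    ultimately show ?thesis using assms unfolding cpath_def by (simp add: insert_commute)
  qed
  then show ?thesis using assms unfolding cpath_def by simp
qed

lemma cycle_contra:
  assumes X: "x \<in> Xsub n" and P: "cpath x n P" and k: "2 \<le> k" "k < length P"
    and e: "x {P ! 0, P ! k} = 1"
  shows False
proof -
  have dist: "distinct P" and sub: "set P \<subseteq> Vplus n" and cons: "\<And>i. i + 1 < length P \<Longrightarrow> x {P ! i, P ! (i + 1)} = 1"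
    using P unfolding cpath_def by auto
  have nthinj: "a = b" if "P ! a = P ! b" "a < length P" "b < length P" for a b
    using that dist nth_eq_iff_index_eq by blast
  have PV: "P ! a \<in> Vplus n" if "a < length P" for a
    using sub nth_mem[OF that] by blast
  have Pn: "P ! a \<le> n" "P ! a \<noteq> 0" if "a < length P" for a
    using PV[OF that] by (auto simp: Vplus_def)
  define S where "S = (\<lambda>i. P ! i) ` {0..k}"
  have injS: "inj_on (\<lambda>i. P ! i) {0..k}" using nthinj k by (auto intro!: inj_onI)
  have cardS: "card S = k + 1" unfolding S_def using card_image[OF injS] by simp
  have SV: "S \<noteq> {}" "S \<subseteq> Vplus n" unfolding S_def using sub k by auto
  have bound: "sum x (Ein n S) \<le> real (card S) - 1" using Xsub_D(3)[OF X] SV by blast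
  define Ec where "Ec = (\<lambda>i. {P ! i, P ! (i + 1)}) ` {..<k}"
  define e0 where "e0 = {P ! 0, P ! k}"
  have injE: "inj_on (\<lambda>i. {P ! i, P ! (i + 1)}) {..<k}"
  proof (rule inj_onI)
    fix a b assume a: "a \<in> {..<k}" and b: "b \<in> {..<k}" and ab: "{P ! a, P ! (a + 1)} = {P ! b, P ! (b + 1)}"
    have la: "a < length P" "a + 1 < length P" "b < length P" "b + 1 < length P" using a b k by auto
    from ab have "(P ! a = P ! b \<and> P ! (a + 1) = P ! (b + 1)) \<or> (P ! a = P ! (b + 1) \<and> P ! (a + 1) = P ! b)"
      by (simp add: doubleton_eq_iff)
    then show "a = b"
    proof
      assume "P ! a = P ! b \<and> P ! (a + 1) = P ! (b + 1)" then show "a = b" using nthinj la by blast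
    next
      assume h: "P ! a = P ! (b + 1) \<and> P ! (a + 1) = P ! b"
      then have "a = b + 1" "a + 1 = b" using nthinj la by blast+
      then show "a = b" by simp
    qed
  qed
  have e0E: "e0 \<notin> Ec"
  proof
    assume "e0 \<in> Ec"
    then obtain i where i: "i < k" "{P ! 0, P ! k} = {P ! i, P ! (i + 1)}" by (auto simp: Ec_def e0_def)
    have li: "0 < length P" "i < length P" "i + 1 < length P" using i k by auto
    from i(2) have "(P ! 0 = P ! i \<and> P ! k = P ! (i + 1)) \<or> (P ! 0 = P ! (i + 1) \<and> P ! k = P ! i)"
      by (simp add: doubleton_eq_iff)
    then show False
    proof
      assume "P ! 0 = P ! i \<and> P ! k = P ! (i + 1)"
      then have "0 = i" "k = i + 1" using nthinj li k by blast+
      then show False using k by simp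
    next
      assume "P ! 0 = P ! (i + 1) \<and> P ! k = P ! i"
      then have "0 = i + 1" using nthinj li by blast
      then show False by simp
    qed
  qed
  have edge_ok: "{P ! a, P ! b} \<in> Ein n S" if "a \<le> k" "b \<le> k" "a \<noteq> b" for a b
  proof -
    have "P ! a \<noteq> P ! b" using nthinj that k by (metis le_trans less_le_not_le not_le order.strict_trans2)
    then have "{P ! a, P ! b} \<in> Edges n" using edge_in Pn that k by simp
    moreover have "{P ! a, P ! b} \<subseteq> S" using that unfolding S_def by auto
    ultimately show ?thesis unfolding Ein_def by simp
  qed
  have sub2: "insert e0 Ec \<subseteq> Ein n S"
  proof
    fix e assume "e \<in> insert e0 Ec"
    then show "e \<in> Ein n S"
    proof
      assume "e = e0" then show ?thesis using edge_ok[of 0 k] k by (simp add: e0_def)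
    next
      assume "e \<in> Ec"
      then obtain i where "i < k" "e = {P ! i, P ! (i + 1)}" by (auto simp: Ec_def)
      then show ?thesis using edge_ok[of i "i + 1"] by simp
    qed
  qed
  have finEin: "finite (Ein n S)" using finite_Edges unfolding Ein_def by simp
  have nonneg: "\<forall>e \<in> Ein n S. 0 \<le> x e" using Xsub_D(1)[OF X] unfolding Ein_def by simp
  have "sum x (insert e0 Ec) = x e0 + sum x Ec" using e0E by (simp add: Ec_def)
  also have "sum x Ec = (\<Sum>i<k. x {P ! i, P ! (i + 1)})" unfolding Ec_def
    using sum.reindex[OF injE, of x] by (simp add: comp_def)
  also have "\<dots> = (\<Sum>i<k. 1)" using cons k by (intro sum.cong) auto
  finally have "sum x (insert e0 Ec) = real k + 1" using e by (simp add: e0_def)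
  moreover have "sum x (insert e0 Ec) \<le> sum x (Ein n S)"
    using sum_mono2[OF finEin sub2] nonneg by blast
  ultimately show False using bound cardS by simp
qed

lemma int01: "(r::real) \<in> \<int> \<Longrightarrow> 0 \<le> r \<Longrightarrow> r \<le> 1 \<Longrightarrow> r = 0 \<or> r = 1"
proof -
  assume "r \<in> \<int>" "0 \<le> r" "r \<le> 1"
  then obtain m where m: "r = of_int m" "0 \<le> m" "m \<le> 1" by (auto elim!: Ints_cases)
  then have "m = 0 \<or> m = 1" by linarith
  then show ?thesis using m by auto
qed



lemma end_front:
  assumes X: "x \<in> Xsub n" and xi: "\<forall>e \<in> Edges n. x e \<in> \<int>" and P: "cpath x n P"
    and mx: "\<And>Q. cpath x n Q \<Longrightarrow> length Q \<le> length P"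
  shows "(length P = 1 \<longrightarrow> x {0, P ! 0} = 2) \<and> (length P \<ge> 2 \<longrightarrow> x {0, P ! 0} = 1)"
proof -
  have dist: "distinct P" and sub: "set P \<subseteq> Vplus n" and ne: "P \<noteq> []"
    and cons: "\<And>i. i + 1 < length P \<Longrightarrow> x {P ! i, P ! (i + 1)} = 1"
    using P unfolding cpath_def by auto
  define p where "p = P ! 0"
  have pV: "p \<in> Vplus n" using sub ne by (auto simp: p_def)
  have pn: "p \<le> n" "p \<noteq> 0" using pV by (auto simp: Vplus_def)
  have Z: "x {p, u} = 0" if u: "u \<in> Vplus n" "u \<noteq> p" "length P \<ge> 2 \<longrightarrow> u \<noteq> P ! 1" for u
  proof (rule ccontr)
    assume nz: "x {p, u} \<noteq> 0"
    have un: "u \<le> n" "u \<noteq> 0" using u by (auto simp: Vplus_def)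
    have E: "{p, u} \<in> Edges n" using edge_in pn un u(2) by simp
    have "x {p, u} \<in> \<int>" using xi E by blast
    moreover have "0 \<le> x {p, u}" using edge_nonneg[OF X] pn un u(2) by simp
    moreover have "x {p, u} \<le> 1" using pair_le1[OF X pV u(1)] u(2) by simp
    ultimately have x1: "x {p, u} = 1" using int01 nz by blast
    show False
    proof (cases "u \<in> set P")
      case False
      have "cpath x n (u # P)"
        unfolding cpath_def
      proof (intro conjI allI impI)
        show "u # P \<noteq> []" by simp
        show "distinct (u # P)" using dist False by simp
        show "set (u # P) \<subseteq> Vplus n" using sub u by simp
        fix i assume i: "i + 1 < length (u # P)"
        show "x {(u # P) ! i, (u # P) ! (i + 1)} = 1"
        proof (cases i)
          case 0 then show ?thesis using x1 by (simp add: p_def insert_commute)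
        next
          case (Suc j) then show ?thesis using cons[of j] i by simp
        qed
      qed
      then show False using mx[of "u # P"] by simp
    next
      case True
      then obtain k where k: "k < length P" "P ! k = u" by (auto simp: in_set_conv_nth)
      have "k \<noteq> 0"
      proof
        assume "k = 0" then show False using k u(2) by (simp add: p_def)
      qed
      moreover have "k \<noteq> 1"
      proof
        assume k1: "k = 1" then have "length P \<ge> 2" using k by simp
        then show False using k u(3) k1 by simp
      qed
      ultimately have "2 \<le> k" by simp
      then show False using cycle_contra[OF X P _ k(1)] x1 k(2) by (simp add: p_def)
    qed
  qed
  have fin: "finite ({0..n} - {p})" by simp
  have deg: "(\<Sum>u\<in>{0..n} - {p}. x {p, u}) = 2" using deg_sum[OF X pV] .
  have rest0: "x {p, u} = 0" if "u \<in> ({0..n} - {p}) - B" "0 \<in> B" "length P \<ge> 2 \<longrightarrow> P ! 1 \<in> B" for u B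
  proof -
    have uu: "u \<in> {0..n} - {p}" "u \<notin> B" using that(1) by auto
    have u0: "u \<noteq> 0" using uu(2) that(2) by metis
    have un: "u \<le> n" "u \<noteq> p" using uu(1) by auto
    have uV: "u \<in> Vplus n" using u0 un by (simp add: Vplus_def)
    have "length P \<ge> 2 \<longrightarrow> u \<noteq> P ! 1" using uu(2) that(3) by metis
    then show ?thesis using Z uV un by simp
  qed
  show ?thesis
  proof (intro conjI impI)
    assume l1: "length P = 1"
    have "(\<Sum>u\<in>{0..n} - {p}. x {p, u}) = (\<Sum>u\<in>{0}. x {p, u})"
      by (rule sum.mono_neutral_right[OF fin]) (use pn rest0[of _ "{0}"] l1 in auto)
    then show "x {0, P ! 0} = 2" using deg by (simp add: p_def insert_commute)
  next
    assume l2: "length P \<ge> 2"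
    have q: "P ! 1 \<in> Vplus n" using sub l2 by (auto intro!: nth_mem[THEN subsetD[OF sub]])
    have qp: "P ! 1 \<noteq> p" using nth_eq_iff_index_eq[OF dist, of 1 0] l2 ne by (simp add: p_def)
    have q0: "P ! 1 \<noteq> 0" "P ! 1 \<le> n" using q by (auto simp: Vplus_def)
    have "(\<Sum>u\<in>{0..n} - {p}. x {p, u}) = (\<Sum>u\<in>{0, P ! 1}. x {p, u})"
      by (rule sum.mono_neutral_right[OF fin]) (use pn q0 qp rest0[of _ "{0, P ! 1}"] in auto)
    moreover have "x {p, P ! 1} = 1" using cons[of 0] l2 by (simp add: p_def)
    ultimately show "x {0, P ! 0} = 1" using deg q0 by (simp add: p_def insert_commute)
  qed
qed

lemma route_exists:
  assumes X: "x \<in> Xsub n" and xi: "\<forall>e \<in> Edges n. x e \<in> \<int>" and n: "1 \<le> n"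
  shows "\<exists>R. route_of n x R"
proof -
  define CP where "CP = {P. cpath x n P}"
  have finCP: "finite CP"
    by (rule finite_subset[OF _ finite_subset_distinct[of "Vplus n"]]) (auto simp: CP_def cpath_def Vplus_def)
  have "[1] \<in> CP" using n by (simp add: CP_def cpath_def Vplus_def)
  then have ne: "length ` CP \<noteq> {}" by auto
  obtain P where PC: "P \<in> CP" "length P = Max (length ` CP)"
    using Max_in[OF finite_imageI[OF finCP] ne] by auto
  have P: "cpath x n P" using PC by (simp add: CP_def)
  have mx: "length Q \<le> length P" if "cpath x n Q" for Q
    using that PC finCP by (simp add: CP_def)
  have mx': "length Q \<le> length (rev P)" if "cpath x n Q" for Q using mx[OF that] by simp
  note F = end_front[OF X xi P mx]
  note Bk = end_front[OF X xi cpath_rev[OF P] mx']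
  have dist: "distinct P" and sub: "set P \<subseteq> Vplus n" and ne: "P \<noteq> []"
    and cons: "\<And>i. i + 1 < length P \<Longrightarrow> x {P ! i, P ! (i + 1)} = 1"
    using P unfolding cpath_def by auto
  have "route_of n x P"
    unfolding route_of_def
  proof (intro conjI impI ballI)
    show "P \<noteq> []" "distinct P" "set P \<subseteq> Vplus n" using ne dist sub by auto
    assume "length P = 1" then show "x {0, hd P} = 2" using F ne by (simp add: hd_conv_nth)
  next
    fix i assume l2: "2 \<le> length P" and i: "i \<in> {1..length P + 1}"
    show "x {rvert P (i - 1), rvert P i} = 1"
    proof (cases "i = 1")
      case True then show ?thesis using F l2 by (simp add: rvert_def)
    next
      case False
      show ?thesis
      proof (cases "i = length P + 1")
        case True
        have "rev P ! 0 = P ! (length P - 1)" using ne by (simp add: rev_nth)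
        then show ?thesis using Bk l2 True by (simp add: rvert_def insert_commute)
      next
        case False
        with \<open>i \<noteq> 1\<close> i have "2 \<le> i" "i \<le> length P" by auto
        then obtain j where j: "i = j + 2" "j + 2 \<le> length P" by (metis add.commute le_Suc_ex)
        have "rvert P (i - 1) = P ! j" "rvert P i = P ! (j + 1)" using j by (simp_all add: rvert_def)
        then show ?thesis using cons[of j] j by simp
      qed
    qed
  qed
  then show ?thesis by blast
qed



definition lift :: "(nat \<times> nat \<Rightarrow> int) \<Rightarrow> (nat \<times> nat \<Rightarrow> real)" where
  "lift y = (\<lambda>i. real_of_int (y i))"

lemma realpts_lift: "realpts Y = lift ` Y"
  by (simp add: realpts_def lift_def)

lemma lift_mrg: "mrg P (lift a) (lift c) = lift (mrg P a c)"
  by (simp add: mrg_def lift_def fun_eq_iff)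

lemma lift_inj: "lift a = lift c \<Longrightarrow> a = c"
  by (simp add: lift_def fun_eq_iff)

lemma conv_single: "w \<in> S \<Longrightarrow> w \<in> conv S"
  unfolding conv_def by (rule CollectI, rule exI[of _ "{w}"], rule exI[of _ "\<lambda>_. 1"]) simp

lemma conv_RAmb: "S \<subseteq> RAmb n N \<Longrightarrow> conv S \<subseteq> RAmb n N"
proof
  fix z assume S: "S \<subseteq> RAmb n N" and z: "z \<in> conv S"
  then obtain F u where F: "F \<subseteq> S" and zz: "z = (\<lambda>i. \<Sum>w\<in>F. u w * w i)" unfolding conv_def by blast
  have "z (\<xi>, v) = 0" if "(\<xi>, v) \<notin> {1..N} \<times> Vplus n" for \<xi> v
  proof -
    have "\<forall>w\<in>F. w (\<xi>, v) = 0" using F S that unfolding RAmb_def by blast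
    then show ?thesis unfolding zz by (auto intro!: sum.neutral)
  qed
  then show "z \<in> RAmb n N" unfolding RAmb_def by blast
qed

lemma PiR_rev: "PiR n N C d (rev R) = PiR n N C d R"
  unfolding PiR_def by (simp add: Yset_rev_eq)

lemma merge_Amb_Box:
  assumes "a \<in> Amb n N \<inter> Box n N b" "c \<in> Amb n N \<inter> Box n N b"
  shows "mrg P a c \<in> Amb n N \<inter> Box n N b"
  using assms unfolding Amb_def Box_def mrg_def by auto

lemma merge_PiR_same:
  assumes "a \<in> PiR n N C d R" "m \<in> Amb n N" "\<forall>\<xi> \<in> {1..N}. \<forall>v \<in> set R. m (\<xi>, v) = a (\<xi>, v)"
  shows "m \<in> PiR n N C d R"
proof -
  have "\<forall>\<xi> \<in> {1..N}. (\<lambda>v. m (\<xi>, v)) \<in> Yset C (d \<xi>) R"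
  proof
    fix \<xi> assume \<xi>: "\<xi> \<in> {1..N}"
    have "(\<lambda>v. a (\<xi>, v)) \<in> Yset C (d \<xi>) R" using assms(1) \<xi> unfolding PiR_def by blast
    then show "(\<lambda>v. m (\<xi>, v)) \<in> Yset C (d \<xi>) R"
      by (rule Yset_cong[rotated]) (use assms(3) \<xi> in auto)
  qed
  then show ?thesis using assms(2) unfolding PiR_def by blast
qed



theorem lemma7:
  fixes n N k :: nat and C :: real and d :: "nat \<Rightarrow> nat \<Rightarrow> real" and p :: "nat \<Rightarrow> real"
    and b :: "nat \<Rightarrow> int" and X :: "(nat set \<Rightarrow> real) set" and xbar :: "nat set \<Rightarrow> real"
  assumes C_pos: "C > 0"
    and d_rat: "\<forall>\<xi> \<in> {1..N}. \<forall>v \<in> Vplus n. d \<xi> v \<in> \<rat>"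
    and d_bnd: "\<forall>\<xi> \<in> {1..N}. \<forall>v \<in> Vplus n. 0 \<le> d \<xi> v \<and> d \<xi> v \<le> C"
    and p_nonneg: "\<forall>\<xi> \<in> {1..N}. 0 \<le> p \<xi>"
    and p_sum: "(\<Sum>\<xi> \<in> {1..N}. p \<xi>) = 1"
    and X_choice: "X = Xsub n \<or> X = Xcvrp n k C (\<lambda>v. \<Sum>\<xi> \<in> {1..N}. p \<xi> * d \<xi> v)"
    and b_nonneg: "\<forall>v \<in> Vplus n. 0 \<le> b v"
    and xbar_X: "xbar \<in> X"
    and xbar_int: "\<forall>e \<in> Edges n. xbar e \<in> \<int>"
  shows "conv (realpts (PiX n N C d xbar \<inter> Box n N b))
         = RAmb n N \<inter> (\<Inter>R \<in> Routes n xbar. conv (realpts (PiR n N C d R \<inter> Box n N b)))"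
proof -
  have Xs: "xbar \<in> Xsub n"
    using X_choice
  proof
    assume "X = Xsub n" then show ?thesis using xbar_X by simp
  next
    assume "X = Xcvrp n k C (\<lambda>v. \<Sum>\<xi> \<in> {1..N}. p \<xi> * d \<xi> v)"
    then show ?thesis using xbar_X unfolding Xcvrp_def by simp
  qed
  define Base where "Base = Amb n N \<inter> Box n N b"
  define A where "A R = PiR n N C d R \<inter> Box n N b" for R
  let ?Rs = "Routes n xbar"
  have memR: "R \<in> ?Rs \<longleftrightarrow> route_of n xbar R" for R by (simp add: Routes_def)
  have finR: "finite ?Rs"
  proof (rule finite_subset[OF _ finite_subset_distinct[of "Vplus n"]])
    show "?Rs \<subseteq> {xs. set xs \<subseteq> Vplus n \<and> distinct xs}"
    proof
      fix R assume "R \<in> ?Rs"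
      then have "route_of n xbar R" using memR by simp
      then show "R \<in> {xs. set xs \<subseteq> Vplus n \<and> distinct xs}" using route_basic(2,3) by simp
    qed
    show "finite (Vplus n)" by (simp add: Vplus_def)
  qed
  have PiRAmb: "PiR n N C d R \<subseteq> Amb n N" for R unfolding PiR_def by blast
  have A_sub: "A R \<subseteq> Base" for R using PiRAmb[of R] unfolding A_def Base_def by blast
  have PiX_eq: "PiX n N C d xbar \<inter> Box n N b = Base \<inter> \<Inter>(A ` ?Rs)"
    unfolding PiX_def Base_def A_def by blast
  show ?thesis
  proof (intro equalityI subsetI)
    fix z assume z: "z \<in> conv (realpts (PiX n N C d xbar \<inter> Box n N b))"
    have "realpts (PiX n N C d xbar \<inter> Box n N b) \<subseteq> RAmb n N"
      unfolding realpts_def RAmb_def PiX_def Amb_def by auto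
    then have "z \<in> RAmb n N" using conv_RAmb z by blast
    moreover have "z \<in> conv (realpts (PiR n N C d R \<inter> Box n N b))" if "R \<in> ?Rs" for R
    proof -
      have "PiX n N C d xbar \<inter> Box n N b \<subseteq> PiR n N C d R \<inter> Box n N b"
        using that unfolding PiX_def by blast
      then show ?thesis using z conv_mono[OF image_mono] unfolding realpts_def by blast
    qed
    ultimately show "z \<in> RAmb n N \<inter> (\<Inter>R \<in> ?Rs. conv (realpts (PiR n N C d R \<inter> Box n N b)))"
      by blast
  next
    fix z assume z: "z \<in> RAmb n N \<inter> (\<Inter>R \<in> ?Rs. conv (realpts (PiR n N C d R \<inter> Box n N b)))"
    have zR: "z \<in> conv (realpts (A R))" if "R \<in> ?Rs" for R using z that unfolding A_def by blast
    have base: "z \<in> conv (realpts Base)"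
    proof (cases "?Rs = {}")
      case False
      then obtain R0 where "R0 \<in> ?Rs" by blast
      then show ?thesis using zR[of R0] conv_mono[OF image_mono[OF A_sub[of R0]]]
        unfolding realpts_def by blast
    next
      case True
      have n0: "n = 0"
      proof (rule ccontr)
        assume "n \<noteq> 0"
        then obtain R where "route_of n xbar R" using route_exists[OF Xs xbar_int] by fastforce
        then show False using True memR by blast
      qed
      have z0: "z = lift (\<lambda>_. 0)"
      proof
        fix i :: "nat \<times> nat"
        obtain \<xi> v where i: "i = (\<xi>, v)" by (cases i)
        have "(\<xi>, v) \<notin> {1..N} \<times> Vplus n" using n0 by (simp add: Vplus_def)
        then show "z i = lift (\<lambda>_. 0) i" using z i unfolding RAmb_def lift_def by auto
      qed
      have "(\<lambda>_. 0) \<in> Base" using n0 unfolding Base_def Amb_def Box_def by (simp add: Vplus_def)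
      then show ?thesis using z0 conv_single by (simp add: realpts_lift)
    qed
    have main: "finite F \<Longrightarrow> F \<subseteq> ?Rs \<Longrightarrow> z \<in> conv (realpts (Base \<inter> \<Inter>(A ` F)))" for F
    proof (induction F rule: finite_induct)
      case empty
      then show ?case using base by simp
    next
      case (insert R F)
      then have RR: "R \<in> ?Rs" and FR: "F \<subseteq> ?Rs" by auto
      have Rr: "route_of n xbar R" using RR memR by blast
      define P where "P = {1..N} \<times> set R"
      have IH: "z \<in> conv (realpts (Base \<inter> \<Inter>(A ` F)))" using insert.IH FR by blast
      have M: "\<forall>a\<in>realpts (A R). \<forall>c\<in>realpts (Base \<inter> \<Inter>(A ` F)).
                 mrg P a c \<in> realpts (Base \<inter> \<Inter>(A ` insert R F))"
      proof (intro ballI)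
        fix a c assume a: "a \<in> realpts (A R)" and c: "c \<in> realpts (Base \<inter> \<Inter>(A ` F))"
        obtain a0 where a0: "a0 \<in> A R" "a = lift a0" using a by (auto simp: realpts_lift)
        obtain c0 where c0: "c0 \<in> Base \<inter> \<Inter>(A ` F)" "c = lift c0" using c by (auto simp: realpts_lift)
        define m where "m = mrg P a0 c0"
        have mB: "m \<in> Base" using merge_Amb_Box[of a0 n N b c0 P] a0(1) A_sub[of R] c0(1)
          unfolding m_def Base_def by blast
        have mAmb: "m \<in> Amb n N" and mBox: "m \<in> Box n N b" using mB unfolding Base_def by auto
        have a0P: "a0 \<in> PiR n N C d R" using a0(1) unfolding A_def by blast
        have mAR: "m \<in> A R"
        proof -
          have "\<forall>\<xi> \<in> {1..N}. \<forall>v \<in> set R. m (\<xi>, v) = a0 (\<xi>, v)"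
            by (simp add: m_def mrg_def P_def)
          then have "m \<in> PiR n N C d R" using merge_PiR_same[OF a0P mAmb] by blast
          then show ?thesis using mBox unfolding A_def by blast
        qed
        have mAF: "m \<in> A R'" if R': "R' \<in> F" for R'
        proof (cases "set R \<inter> set R' = {}")
          case True
          have c0P: "c0 \<in> PiR n N C d R'" using c0(1) R' unfolding A_def by blast
          have "\<forall>\<xi> \<in> {1..N}. \<forall>v \<in> set R'. m (\<xi>, v) = c0 (\<xi>, v)"
            using True by (auto simp: m_def mrg_def P_def)
          then have "m \<in> PiR n N C d R'" using merge_PiR_same[OF c0P mAmb] by blast
          then show ?thesis using mBox unfolding A_def by blast
        next
          case False
          then obtain v where v: "v \<in> set R" "v \<in> set R'" by blast
          have "route_of n xbar R'" using R' FR memR by blast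
          then have "R' = R \<or> R' = rev R" using route_share[OF Xs Rr _ v] by blast
          then have "A R' = A R" unfolding A_def using PiR_rev by metis
          then show ?thesis using mAR by simp
        qed
        have "m \<in> Base \<inter> \<Inter>(A ` insert R F)" using mB mAR mAF by blast
        moreover have "mrg P a c = lift m" using a0(2) c0(2) lift_mrg by (simp add: m_def)
        ultimately show "mrg P a c \<in> realpts (Base \<inter> \<Inter>(A ` insert R F))"
          by (simp add: realpts_lift)
      qed
      show ?case using conv_merge[OF M zR[OF RR] IH] .
    qed
    have "z \<in> conv (realpts (Base \<inter> \<Inter>(A ` ?Rs)))" using main[OF finR] by blast
    then show "z \<in> conv (realpts (PiX n N C d xbar \<inter> Box n N b))" using PiX_eq by simp
  qed
qed

end
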